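(* Let $s,t$ be positive integers, $k,l$ nonnegative integers and $r$ a positive integer. Put $$a=\frac{l(s+t)+t}{s+t},\qquad b=\frac{k(s+t)+s}{s+t},$$ and define $$P(x)=\left(\frac{x-1}{2}\right)^{l(s+t)+t}\left(\frac{x+1}{2}\right)^{k(s+t)+s}J_{r-1}(a,b,x)^{s+t},\qquad Q(x)=J_{k+l+r}(-a,-b,x)^{s+t}.$$ Then $\deg(P-Q)\le m$, where $m=(k+l+r)(s+t-1)-r$.
   Context: For a nonnegative integer $N$ and complex parameters $\alpha,\beta$, the (generalized) Jacobi polynomial is $J_N(\alpha,\beta,x)=\sum_{j=0}^{N}\binom{N+\alpha+\beta+j}{j}\binom{N+\alpha}{N-j}\left(\frac{x-1}{2}\right)^j$, where $\binom{y}{j}=y(y-1)\cdots(y-j+1)/j!$ for arbitrary $y$. Here $a+b=k+l+1$. The polynomials $P,Q$ have degree $(s+t)(k+l+r)$, and $m$ is this degree minus $k+l+2r$; this is the Davenport–Zannier pair for the "even double brush" weighted tree (a chain with alternating edge weights $s,t$ and $r$ inner white vertices, with $k$ and $l$ leaves of weight $s+t$ attached at its two ends). *)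

theory Defs
  imports "HOL-Computational_Algebra.Polynomial" Complex_Main
begin

definition jacobi_poly :: "nat \<Rightarrow> complex \<Rightarrow> complex \<Rightarrow> complex poly" where
  "jacobi_poly N al be =
     (\<Sum>j=0..N. smult (((of_nat N + al + be + of_nat j) gchoose j) * ((of_nat N + al) gchoose (N - j)))
                       ([:-1/2, 1/2:] ^ j))"

end

theory Submission
  imports Defs
begin


definition jc :: "nat \<Rightarrow> complex \<Rightarrow> complex \<Rightarrow> nat \<Rightarrow> complex" where
 "jc N al be j = (if j \<le> N then ((of_nat N + al + be + of_nat j) gchoose j) * ((of_nat N + al) gchoose (N - j)) else 0)"

definition jw :: "nat \<Rightarrow> complex \<Rightarrow> complex \<Rightarrow> complex poly" where
 "jw N al be = (\<Sum>j=0..N. monom (jc N al be j) j)"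

lemma coeff_jw: "coeff (jw N al be) i = jc N al be i"
  unfolding jw_def coeff_sum by (simp add: jc_def)

lemma jacobi_jw: "jacobi_poly N al be = pcompose (jw N al be) [:-1/2,1/2:]"
proof -
  have "poly (jacobi_poly N al be) x = poly (pcompose (jw N al be) [:-1/2,1/2:]) x" for x
    unfolding jacobi_poly_def jw_def poly_pcompose poly_sum
    by (intro sum.cong) (auto simp: poly_monom jc_def)
  then show ?thesis using poly_eq_poly_eq_iff by blast
qed

lemma gb1: "of_nat (Suc j) * ((y + 1) gchoose Suc j) = (y + 1) * (y gchoose j)"
  for y :: complex
  using gbinomial_absorption[of j "y+1"] by simp

lemma gb2: "of_nat (Suc m) * (z gchoose Suc m) = (z - of_nat m) * (z gchoose m)"
  for z :: complex
  using gbinomial_absorption[of m z] gbinomial_absorb_comp[of z m] by simp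

lemma jc_rec: "of_nat (Suc j) * (of_nat j + al + 1) * jc N al be (Suc j)
   = (of_nat N - of_nat j) * (of_nat N + of_nat j + al + be + 1) * jc N al be j"
proof (cases "j < N")
  case True
  define Y where "Y = of_nat N + al + be + of_nat j"
  define z where "z = of_nat N + al"
  define m where "m = N - Suc j"
  have m: "N - j = Suc m" "N - Suc j = m" using True by (auto simp: m_def)
  have zm: "z - of_nat m = of_nat j + al + 1" using True
    by (simp add: z_def m_def of_nat_diff)
  have e1: "jc N al be (Suc j) = ((Y+1) gchoose Suc j) * (z gchoose m)"
    using True by (simp add: jc_def Y_def z_def m add_ac)
  have e2: "jc N al be j = (Y gchoose j) * (z gchoose Suc m)"
    using True by (simp add: jc_def Y_def z_def m)
  have nm: "of_nat N - of_nat j = (of_nat (Suc m) :: complex)"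
    using True m by (simp add: of_nat_diff[symmetric])
  have "of_nat (Suc j) * (of_nat j + al + 1) * jc N al be (Suc j)
      = (of_nat (Suc j) * ((Y+1) gchoose Suc j)) * (z gchoose m) * (z - of_nat m)"
    by (simp add: e1 zm)
  also have "\<dots> = (Y+1) * (Y gchoose j) * ((z - of_nat m) * (z gchoose m))"
    by (simp only: gb1) (simp add: mult_ac)
  also have "\<dots> = (Y+1) * (Y gchoose j) * (of_nat (Suc m) * (z gchoose Suc m))"
    by (simp only: gb2)
  also have "\<dots> = (of_nat N - of_nat j) * (of_nat N + of_nat j + al + be + 1) * jc N al be j"
    by (simp add: e2 nm Y_def add_ac)
  finally show ?thesis .
next
  case False
  then show ?thesis by (cases "j = N") (auto simp: jc_def)
qed

lemma jw_ode:
  fixes N :: nat and al be :: complex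
  defines "p \<equiv> jw N al be"
  shows "pCons 0 (pCons 0 (pderiv (pderiv p))) + pCons 0 (pderiv (pderiv p))
     + smult (al+1) (pderiv p) + smult (al+be+2) (pCons 0 (pderiv p))
     = smult (of_nat N * (of_nat N + al + be + 1)) p"
proof (rule poly_eqI)
  fix j
  define nn where "nn = (of_nat N :: complex)"
  show "coeff (pCons 0 (pCons 0 (pderiv (pderiv p))) + pCons 0 (pderiv (pderiv p))
     + smult (al+1) (pderiv p) + smult (al+be+2) (pCons 0 (pderiv p))) j =
     coeff (smult (of_nat N * (of_nat N + al + be + 1)) p) j"
  proof (cases j)
    case 0
    then show ?thesis using jc_rec[of 0 al N be]
      by (simp add: p_def coeff_pderiv coeff_jw algebra_simps)
  next
    case (Suc i)
    note i = Suc
    show ?thesis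
    proof (cases i)
      case 0
      define u where "u = jc N al be 1"
      define v where "v = jc N al be 2"
      have r: "2 * (1 + al + 1) * v = (nn - 1) * (nn + 1 + al + be + 1) * u"
        using jc_rec[of 1 al N be] by (simp add: u_def v_def nn_def numeral_2_eq_2)
      have "coeff (pCons 0 (pCons 0 (pderiv (pderiv p))) + pCons 0 (pderiv (pderiv p))
     + smult (al+1) (pderiv p) + smult (al+be+2) (pCons 0 (pderiv p))) j
       = 2 * v + (al+1) * 2 * v + (al+be+2) * u"
        using i 0 by (simp add: p_def coeff_pderiv coeff_jw u_def v_def numeral_2_eq_2)
      moreover have "coeff (smult (of_nat N * (of_nat N + al + be + 1)) p) j = nn*(nn+al+be+1)*u"
        using i 0 by (simp add: p_def coeff_jw u_def nn_def)
      moreover have "2 * v + (al+1) * 2 * v + (al+be+2) * u = nn*(nn+al+be+1)*u"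
        using r by algebra
      ultimately show ?thesis by simp
    next
      case (Suc i')
      define x where "x = (of_nat i' :: complex)"
      define u where "u = jc N al be (Suc (Suc i'))"
      define v where "v = jc N al be (Suc (Suc (Suc i')))"
      have r: "(x+3) * (x + 2 + al + 1) * v = (nn - (x+2)) * (nn + (x+2) + al + be + 1) * u"
        using jc_rec[of "Suc (Suc i')" al N be] by (simp add: u_def v_def nn_def x_def add_ac)
      have "coeff (pCons 0 (pCons 0 (pderiv (pderiv p))) + pCons 0 (pderiv (pderiv p))
     + smult (al+1) (pderiv p) + smult (al+be+2) (pCons 0 (pderiv p))) j
       = (x+1)*(x+2)*u + (x+2)*(x+3)*v + (al+1)*(x+3)*v + (al+be+2)*(x+2)*u"
        using i Suc by (simp add: p_def coeff_pderiv coeff_jw u_def v_def x_def algebra_simps)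
      moreover have "coeff (smult (of_nat N * (of_nat N + al + be + 1)) p) j = nn*(nn+al+be+1)*u"
        using i Suc by (simp add: p_def coeff_jw u_def nn_def)
      moreover have "(x+1)*(x+2)*u + (x+2)*(x+3)*v + (al+1)*(x+3)*v + (al+be+2)*(x+2)*u = nn*(nn+al+be+1)*u"
        using r by algebra
      ultimately show ?thesis by simp
    qed
  qed
qed


lemma wronsk:
  fixes J G :: "complex poly" and a b lam mu :: complex
  assumes odeJ: "pCons 0 (pCons 0 (pderiv (pderiv J))) + pCons 0 (pderiv (pderiv J))
     + smult (a+1) (pderiv J) + smult (a+b+2) (pCons 0 (pderiv J)) = smult lam J"
  and odeG: "pCons 0 (pCons 0 (pderiv (pderiv G))) + pCons 0 (pderiv (pderiv G))
     + smult (-a+1) (pderiv G) + smult (-a + -b +2) (pCons 0 (pderiv G)) = smult mu G"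
  and sc: "a + b + lam - mu = 0"
  shows "pderiv ([:a, a+b:] * J * G + [:0,1,1:] * (pderiv J * G - J * pderiv G)) = 0"
proof -
  have "poly (pderiv ([:a, a+b:] * J * G + [:0,1,1:] * (pderiv J * G - J * pderiv G))) x = 0" for x
  proof -
    have oJ: "x*(x*poly (pderiv (pderiv J)) x) + x*poly (pderiv (pderiv J)) x
      + (a+1) * poly (pderiv J) x + (a+b+2)*(x*poly (pderiv J) x) = lam * poly J x"
      using arg_cong[OF odeJ, of "\<lambda>p. poly p x"] by (simp add: algebra_simps)
    have oG: "x*(x*poly (pderiv (pderiv G)) x) + x*poly (pderiv (pderiv G)) x
      + (-a+1) * poly (pderiv G) x + (-a + -b +2)*(x*poly (pderiv G) x) = mu * poly G x"
      using arg_cong[OF odeG, of "\<lambda>p. poly p x"] by (simp add: algebra_simps)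
    define j0 where "j0 = poly J x"
    define j1 where "j1 = poly (pderiv J) x"
    define j2 where "j2 = poly (pderiv (pderiv J)) x"
    define g0 where "g0 = poly G x"
    define g1 where "g1 = poly (pderiv G) x"
    define g2 where "g2 = poly (pderiv (pderiv G)) x"
    have e: "poly (pderiv ([:a, a+b:] * J * G + [:0,1,1:] * (pderiv J * G - J * pderiv G))) x
      = (a+b)*j0*g0 + (a + (a+b)*x)*(j1*g0+j0*g1) + (1+2*x)*(j1*g0-j0*g1) + (x+x*x)*(j2*g0-j0*g2)"
      unfolding j0_def j1_def j2_def g0_def g1_def g2_def
      by (simp add: pderiv_mult pderiv_add pderiv_diff pderiv_pCons pderiv_smult) (simp add: algebra_simps)
    have "(a+b)*j0*g0 + (a + (a+b)*x)*(j1*g0+j0*g1) + (1+2*x)*(j1*g0-j0*g1) + (x+x*x)*(j2*g0-j0*g2)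
      = g0 * (x*(x*j2) + x*j2 + (a+1)*j1 + (a+b+2)*(x*j1) - lam*j0)
      - j0 * (x*(x*g2) + x*g2 + (-a+1)*g1 + (-a + -b +2)*(x*g1) - mu*g0)
      + (a+b+lam-mu)*j0*g0"
      by (simp add: algebra_simps)
    also have "\<dots> = 0" using oJ oG sc unfolding j0_def j1_def j2_def g0_def g1_def g2_def
      by simp
    finally show ?thesis using e by simp
  qed
  then have "poly (pderiv ([:a, a+b:] * J * G + [:0,1,1:] * (pderiv J * G - J * pderiv G))) = poly 0"
    by (simp add: fun_eq_iff)
  then show ?thesis using poly_eq_poly_eq_iff by blast
qed



lemma key_deg:
  fixes P Q :: "complex poly"
  assumes dP: "degree P = e" and dQ: "degree Q = e" and lc: "lead_coeff P = lead_coeff Q"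
    and e1: "e \<ge> 1" and R: "degree (pderiv P * Q - P * pderiv Q) \<le> K" and eK: "e \<le> K + 1"
  shows "degree (P - Q) + e \<le> K + 1"
proof (cases "P - Q = 0")
  case True then show ?thesis using eK by simp
next
  case False
  define D where "D = P - Q"
  define d where "d = degree D"
  define c where "c = lead_coeff D"
  have c0: "c \<noteq> 0" using False unfolding c_def D_def by (metis leading_coeff_0_iff)
  have de: "d \<le> e" using degree_diff_le[of P e Q] dP dQ by (simp add: d_def D_def)
  have "coeff D e = 0" using lc dP dQ by (simp add: D_def)
  then have dne: "d \<noteq> e" using c0 by (auto simp: c_def d_def)
  have q0: "lead_coeff Q \<noteq> 0" using dQ e1 by auto
  have eq: "pderiv P * Q - P * pderiv Q = pderiv D * Q - D * pderiv Q"
    by (simp add: D_def pderiv_diff algebra_simps)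
  have c1: "coeff (pderiv D * Q) (d + e - 1) = of_nat d * c * lead_coeff Q"
  proof (cases "d = 0")
    case True
    then have "pderiv D = 0" by (simp add: pderiv_eq_0_iff d_def)
    then show ?thesis using True by simp
  next
    case False
    have dd: "degree (pderiv D) = d - 1" by (simp add: degree_pderiv d_def)
    have "coeff (pderiv D * Q) (degree (pderiv D) + degree Q) = coeff (pderiv D) (d - 1) * lead_coeff Q"
      using coeff_mult_degree_sum[of "pderiv D" Q] dd by simp
    moreover have "coeff (pderiv D) (d - 1) = of_nat d * c"
      using False by (simp add: coeff_pderiv c_def d_def)
    moreover have "degree (pderiv D) + degree Q = d + e - 1" using dd dQ False by simp
    ultimately show ?thesis by simp
  qed
  have c2: "coeff (D * pderiv Q) (d + e - 1) = c * (of_nat e * lead_coeff Q)"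
  proof -
    have dd: "degree (pderiv Q) = e - 1" by (simp add: degree_pderiv dQ)
    have "coeff (D * pderiv Q) (degree D + degree (pderiv Q)) = c * coeff (pderiv Q) (e - 1)"
      using coeff_mult_degree_sum[of D "pderiv Q"] dd by (simp add: c_def)
    moreover have "coeff (pderiv Q) (e - 1) = of_nat e * lead_coeff Q"
      using e1 dQ by (simp add: coeff_pderiv)
    moreover have "degree D + degree (pderiv Q) = d + e - 1" using dd e1 by (simp add: d_def)
    ultimately show ?thesis by simp
  qed
  have "coeff (pderiv P * Q - P * pderiv Q) (d + e - 1) = (of_nat d - of_nat e) * c * lead_coeff Q"
    unfolding eq coeff_diff c1 c2 by (simp add: algebra_simps)
  moreover have "(of_nat d - of_nat e) * c * lead_coeff Q \<noteq> (0::complex)"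
    using dne c0 q0 by simp
  ultimately have "d + e - 1 \<le> degree (pderiv P * Q - P * pderiv Q)"
    by (intro le_degree) simp
  then show ?thesis using R e1 by (simp add: d_def D_def)
qed



lemma pq_ident:
  fixes J G :: "complex poly" and a b T0 :: complex
  assumes hA: "(of_nat (Suc A') :: complex) = of_nat (Suc n') * a"
    and hB: "(of_nat (Suc B')::complex) = of_nat (Suc n') * b"
    and hT: "[:a, a+b:] * J * G + [:0,1,1:] * (pderiv J * G - J * pderiv G) = [:T0:]"
  shows "pderiv ([:0,1:]^Suc A' * [:1,1:]^Suc B' * J^Suc n') * G^Suc n'
     - [:0,1:]^Suc A' * [:1,1:]^Suc B' * J^Suc n' * pderiv (G^Suc n')
     = smult (of_nat (Suc n') * T0) ([:0,1:]^A' * [:1,1:]^B' * J^n' * G^n')"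
proof -
  have "poly (pderiv ([:0,1:]^Suc A' * [:1,1:]^Suc B' * J^Suc n') * G^Suc n'
     - [:0,1:]^Suc A' * [:1,1:]^Suc B' * J^Suc n' * pderiv (G^Suc n')) y
     = poly (smult (of_nat (Suc n') * T0) ([:0,1:]^A' * [:1,1:]^B' * J^n' * G^n')) y" for y
  proof -
    define j0 where "j0 = poly J y"
    define j1 where "j1 = poly (pderiv J) y"
    define g0 where "g0 = poly G y"
    define g1 where "g1 = poly (pderiv G) y"
    define E where "E = y ^ A'"
    define F where "F = (1 + y) ^ B'"
    define JJ where "JJ = j0 ^ n'"
    define GG where "GG = g0 ^ n'"
    define nn where "nn = (of_nat (Suc n') :: complex)"
    have t: "(a + y * (a+b)) * j0 * g0 + y * (1 + y) * (j1 * g0 - j0 * g1) = T0"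
      using arg_cong[OF hT, of "\<lambda>p. poly p y"] unfolding j0_def j1_def g0_def g1_def
      by (simp add: algebra_simps)
    have pU: "poly ([:0,1:]^Suc A') y = y*E" by (simp add: E_def)
    have dU: "poly (pderiv ([:0,1:]^Suc A')) y = nn*a*E"
      unfolding pderiv_power_Suc using hA by (simp add: E_def nn_def pderiv_pCons)
    have pV: "poly ([:1,1:]^Suc B') y = (1+y)*F" by (simp add: F_def algebra_simps)
    have dV: "poly (pderiv ([:1,1:]^Suc B')) y = nn*b*F"
      unfolding pderiv_power_Suc using hB by (simp add: F_def nn_def pderiv_pCons)
    have pW: "poly (J^Suc n') y = j0*JJ" by (simp add: j0_def JJ_def)
    have dW: "poly (pderiv (J^Suc n')) y = nn*JJ*j1"
      unfolding pderiv_power_Suc by (simp add: j0_def JJ_def j1_def nn_def)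
    have pZ: "poly (G^Suc n') y = g0*GG" by (simp add: g0_def GG_def)
    have dZ: "poly (pderiv (G^Suc n')) y = nn*GG*g1"
      unfolding pderiv_power_Suc by (simp add: g0_def GG_def g1_def nn_def)
    have l: "poly (pderiv ([:0,1:]^Suc A' * [:1,1:]^Suc B' * J^Suc n') * G^Suc n'
     - [:0,1:]^Suc A' * [:1,1:]^Suc B' * J^Suc n' * pderiv (G^Suc n')) y
     = ((nn*a) * E * ((1+y)*F) * (j0*JJ) + (nn*b) * (y*E) * F * (j0*JJ)
        + (y*E) * ((1+y)*F) * (nn * JJ * j1)) * (g0 * GG)
       - (y*E) * ((1+y)*F) * (j0*JJ) * (nn * GG * g1)"
      unfolding pderiv_mult poly_diff poly_mult poly_add pU dU pV dV pW dW pZ dZ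
      by (simp add: algebra_simps)
    have r: "poly (smult (of_nat (Suc n') * T0) ([:0,1:]^A' * [:1,1:]^B' * J^n' * G^n')) y
       = nn * T0 * E * F * JJ * GG"
      unfolding j0_def j1_def g0_def g1_def E_def F_def JJ_def GG_def nn_def
      by (simp add: algebra_simps)
    show ?thesis unfolding l r unfolding t[symmetric] by (simp add: algebra_simps)
  qed
  then show ?thesis using poly_eq_poly_eq_iff by blast
qed


theorem mainTheorem4:
  fixes s t k l r :: nat
  assumes "s > 0" and "t > 0" and "r > 0"
  defines "a \<equiv> (of_nat (l * (s + t) + t) / of_nat (s + t) :: complex)"
      and "b \<equiv> (of_nat (k * (s + t) + s) / of_nat (s + t) :: complex)"
  defines "P \<equiv> [:-1/2, 1/2:] ^ (l * (s + t) + t) * [:1/2, 1/2:] ^ (k * (s + t) + s)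
                 * jacobi_poly (r - 1) a b ^ (s + t)"
      and "Q \<equiv> jacobi_poly (k + l + r) (-a) (-b) ^ (s + t)"
  shows "int (degree (P - Q)) \<le> int ((k + l + r) * (s + t - 1)) - int r"
proof -
  define n where "n = s + t"
  define A where "A = l * (s + t) + t"
  define B where "B = k * (s + t) + s"
  define N where "N = k + l + r"
  define M where "M = r - 1"
  define S where "S = k + l + 1"
  define K0 where "K0 = 2 * M + S"
  define n' where "n' = n - 1"
  have n': "n = Suc n'" "n' \<ge> 1" using assms(1,2) by (simp_all add: n'_def n_def)
  define A' where "A' = A - 1"
  define B' where "B' = B - 1"
  have A': "A = Suc A'" using assms(2) by (simp add: A'_def A_def)
  have B': "B = Suc B'" using assms(1) by (simp add: B'_def B_def)
  have rM: "r = Suc M" using assms(3) by (simp add: M_def)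
  have AB: "A + B = n * S" by (simp add: A_def B_def n_def S_def algebra_simps)
  have NMS: "N = M + S" by (simp add: N_def S_def rM)
  have hn: "(of_nat n :: complex) \<noteq> 0" by (simp only: of_nat_eq_0_iff n'(1) nat.distinct(1) not_False_eq_True)
  have ha: "of_nat A = of_nat n * a" using hn by (simp add: a_def A_def n_def)
  have hb: "of_nat B = of_nat n * b" using hn by (simp add: b_def B_def n_def)
  have "of_nat n * (a + b) = of_nat n * (of_nat S :: complex)"
    using ha hb AB by (metis distrib_left of_nat_add of_nat_mult)
  then have hab: "a + b = of_nat S" using hn by simp
  have hb': "b = of_nat S - a" using hab by (simp add: algebra_simps)
  define w where "w = [:-1/2, 1/2 :: complex:]"
  define J where "J = jw M a b"
  define G where "G = jw N (-a) (-b)"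
  define P0 where "P0 = [:0,1:] ^ A * [:1,1:] ^ B * J ^ n"
  define Q0 where "Q0 = G ^ n"
  have JJ: "jacobi_poly (r - 1) a b = pcompose J w" by (simp add: J_def w_def M_def jacobi_jw)
  have GG: "jacobi_poly (k + l + r) (-a) (-b) = pcompose G w" by (simp add: G_def w_def N_def jacobi_jw)
  have hP: "P = pcompose P0 w"
  proof -
    have "poly P x = poly (pcompose P0 w) x" for x
    proof -
      have e1: "poly [:1/2, 1/2:] x = poly [:1,1:] (poly w x)" by (simp add: w_def)
      have e2: "poly [:-1/2, 1/2:] x = poly [:0,1:] (poly w x)" by (simp add: w_def)
      show ?thesis unfolding P_def P0_def poly_pcompose poly_mult poly_power e1 e2 JJ
        by (simp add: A_def B_def n_def)
    qed
    then show ?thesis using poly_eq_poly_eq_iff by blast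
  qed
  have hQ: "Q = pcompose Q0 w"
  proof -
    have "poly Q x = poly (pcompose Q0 w) x" for x
      unfolding Q_def Q0_def poly_pcompose poly_power GG by (simp add: n_def)
    then show ?thesis using poly_eq_poly_eq_iff by blast
  qed
  have degPQ: "degree (P - Q) = degree (P0 - Q0)"
    by (simp add: hP hQ pcompose_diff[symmetric] degree_pcompose w_def)
  have cJ: "coeff J M = of_nat (K0 choose M)"
    by (simp add: J_def coeff_jw jc_def hb' K0_def binomial_gbinomial algebra_simps)
  have cG: "coeff G N = of_nat (K0 choose N)"
    by (simp add: G_def coeff_jw jc_def hb' K0_def NMS binomial_gbinomial algebra_simps)
  have sym: "K0 choose M = K0 choose N"
    using binomial_symmetric[of M K0] by (simp add: K0_def NMS)
  have c0: "K0 choose M \<noteq> 0" by (simp add: K0_def)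
  have degJ: "degree J = M"
  proof (rule antisym)
    show "degree J \<le> M" by (rule degree_le) (simp add: J_def coeff_jw jc_def)
    show "M \<le> degree J" by (rule le_degree) (use c0 in \<open>simp add: cJ\<close>)
  qed
  have degG: "degree G = N"
  proof (rule antisym)
    show "degree G \<le> N" by (rule degree_le) (simp add: G_def coeff_jw jc_def)
    show "N \<le> degree G" by (rule le_degree) (use c0 in \<open>simp add: cG sym[symmetric]\<close>)
  qed
  have lJ: "lead_coeff J = of_nat (K0 choose M)" using cJ degJ by simp
  have lG: "lead_coeff G = of_nat (K0 choose M)" using cG degG sym by simp
  have J0: "J \<noteq> 0" using lJ c0 by auto
  have G0: "G \<noteq> 0" using lG c0 by auto
  have degP0: "degree P0 = n * N"
  proof -
    have "degree P0 = A + B + n * M"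
      unfolding P0_def using J0 by (simp add: degree_mult_eq degree_power_eq degJ)
    then show ?thesis using AB NMS by (simp add: algebra_simps)
  qed
  have degQ0: "degree Q0 = n * N" unfolding Q0_def using G0 by (simp add: degree_power_eq degG)
  have lc: "lead_coeff P0 = lead_coeff Q0"
    unfolding P0_def Q0_def by (simp add: lead_coeff_mult lead_coeff_power lJ lG)
  define T where "T = [:a, a+b:] * J * G + [:0,1,1:] * (pderiv J * G - J * pderiv G)"
  have sc: "a + b + of_nat M * (of_nat M + a + b + 1) - of_nat N * (of_nat N + - a + - b + 1) = (0::complex)"
    by (simp add: hb' NMS algebra_simps)
  have dT: "pderiv T = 0" unfolding T_def
    by (rule wronsk[OF jw_ode[of M a b, folded J_def] jw_ode[of N "-a" "-b", folded G_def] sc])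
  have T0: "T = [:coeff T 0:]" using dT by (simp add: pderiv_eq_0_iff degree_0_id)
  have PQ: "pderiv P0 * Q0 - P0 * pderiv Q0
     = smult (of_nat (Suc n') * coeff T 0) ([:0,1:]^A' * [:1,1:]^B' * J^n' * G^n')"
    unfolding P0_def Q0_def A' B' n'(1)
    by (rule pq_ident) (use ha hb A' B' n' T0 in \<open>simp_all add: T_def\<close>)
  have R: "degree (pderiv P0 * Q0 - P0 * pderiv Q0) \<le> A' + B' + n' * M + n' * N"
  proof -
    have "degree ([:0,1:]^A' * [:1,1:]^B' * J^n' * G^n' :: complex poly)
      \<le> degree ([:0,1:]^A' * [:1,1:]^B' * J^n' :: complex poly) + degree (G^n')"
      by (rule degree_mult_le)
    also have "\<dots> \<le> (degree ([:0,1:]^A' * [:1,1:]^B' :: complex poly) + degree (J^n')) + n' * N"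
      using degree_mult_le[of "[:0,1:]^A' * [:1,1:]^B' :: complex poly" "J^n'"]
        degree_power_le[of G n'] degG by (simp add: mult.commute)
    also have "\<dots> \<le> (A' + B' + n' * M) + n' * N"
      using degree_mult_le[of "[:0,1:]^A' :: complex poly" "[:1,1:]^B'"]
        degree_power_le[of J n'] degJ degree_power_le[of "[:0,1::complex:]" A']
        degree_power_le[of "[:1,1::complex:]" B'] by (simp add: mult.commute)
    finally show ?thesis unfolding PQ using degree_smult_le order_trans by blast
  qed
  have e1: "n * N \<ge> 1" using n' NMS by (simp add: S_def)
  have nN: "n * N = n' * N + N" using n' by simp
  have nS: "n * S = n' * S + S" using n' by simp
  have nMN: "n' * N = n' * M + n' * S" using NMS by (simp add: algebra_simps)
  have n'S: "n' * S \<ge> S" using n' by simp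
  have n'M: "n' * M \<ge> M" using n' by simp
  have "n * N \<le> A' + B' + n' * M + n' * N + 1"
    using A' B' AB nN nS nMN n'S n'M NMS by linarith
  then have main: "degree (P0 - Q0) + n * N \<le> A' + B' + n' * M + n' * N + 1"
    using key_deg[OF degP0 degQ0 lc e1 R] by simp
  have fin: "degree (P0 - Q0) + r \<le> n' * N" using main A' B' AB nN nS nMN NMS rM by linarith
  have "(k + l + r) * (s + t - 1) = n' * N" using n' by (simp add: N_def n_def)
  then show ?thesis unfolding degPQ using fin by linarith
qed

end
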